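(* Let $f(r)=r$ and $q_0\notin\Sigma$. For every initial covector $$\lambda_0\in E_1^*:=E_1\setminus(\{K=0\}\cup\{L=0\}\cup\{w_0=0\}),$$ the unit-speed normal trajectory $\gamma(\cdot;\lambda_0)$ from $q_0$ has first conjugate time $t_{\mathrm{con}}=\pi/|w_0|$.
   Context: Consider $\mathbb R^3$ with points $q=(x,y,z)$, $r=\sqrt{x^2+y^2}$, $\Sigma=\{r=0\}$, and $f(r)=r$. Let $q_0=(x_0,y_0,z_0)$ and $r_0=\sqrt{x_0^2+y_0^2}$. Normal trajectories are projections of solutions of $$\dot x=u,\quad \dot y=v,\quad \dot z=r^2w,\quad \dot u=-w^2x,\quad \dot v=-w^2y,\quad \dot w=0,$$ with initial covector $\lambda_0=(u_0,v_0,w_0)$. Energy shell and coordinates: - $E_1=\{\lambda_0:u_0^2+v_0^2+r_0^2w_0^2=1\}$ is the unit energy shell. - $K=x_0v_0-y_0u_0$ and $L=x_0u_0+y_0v_0$. Exponential map and conjugate time: - $\mathrm{Exp}_{q_0}(\lambda_0)=\gamma(1;\lambda_0)$. - $t_{\mathrm{con}}(\gamma)=\inf\{t>0:\mathrm{Exp}_{q_0}\text{ has a critical point at }t\lambda_0\}$. *)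

theory Defs
  imports "HOL-Analysis.Analysis"
begin

definition fr :: "real \<Rightarrow> real" where "fr r = r"

definition rad :: "real \<times> real \<times> real \<Rightarrow> real" where
  "rad q = (case q of (x, y, z) \<Rightarrow> sqrt (x\<^sup>2 + y\<^sup>2))"

definition Sigma_set :: "(real \<times> real \<times> real) set" where
  "Sigma_set = {q. rad q = 0}"

definition is_normal_sol ::
  "(real \<Rightarrow> real) \<Rightarrow> (real \<Rightarrow> real) \<Rightarrow> (real \<Rightarrow> real) \<Rightarrow>
   (real \<Rightarrow> real) \<Rightarrow> (real \<Rightarrow> real) \<Rightarrow> (real \<Rightarrow> real) \<Rightarrow> bool" where
  "is_normal_sol x y z u v w \<longleftrightarrow>
     (\<forall>t. (x has_real_derivative u t) (at t)
        \<and> (y has_real_derivative v t) (at t)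
        \<and> (z has_real_derivative (fr (rad (x t, y t, z t)))\<^sup>2 * w t) (at t)
        \<and> (u has_real_derivative - (w t)\<^sup>2 * x t) (at t)
        \<and> (v has_real_derivative - (w t)\<^sup>2 * y t) (at t)
        \<and> (w has_real_derivative 0) (at t))"

definition gamma ::
  "real \<times> real \<times> real \<Rightarrow> real \<times> real \<times> real \<Rightarrow> real \<Rightarrow> real \<times> real \<times> real" where
  "gamma q0 l0 t = (THE q. \<exists>x y z u v w. is_normal_sol x y z u v w
       \<and> (x 0, y 0, z 0) = q0 \<and> (u 0, v 0, w 0) = l0 \<and> q = (x t, y t, z t))"

definition Exp :: "real \<times> real \<times> real \<Rightarrow> real \<times> real \<times> real \<Rightarrow> real \<times> real \<times> real" where
  "Exp q0 l0 = gamma q0 l0 1"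

definition critical_point :: "('a::euclidean_space \<Rightarrow> 'b::euclidean_space) \<Rightarrow> 'a \<Rightarrow> bool" where
  "critical_point F p \<longleftrightarrow> F differentiable (at p) \<and> \<not> surj (frechet_derivative F (at p))"

definition t_con :: "real \<times> real \<times> real \<Rightarrow> real \<times> real \<times> real \<Rightarrow> real" where
  "t_con q0 l0 = Inf {t. t > 0 \<and> critical_point (Exp q0) (t *\<^sub>R l0)}"

definition E1 :: "real \<times> real \<times> real \<Rightarrow> (real \<times> real \<times> real) set" where
  "E1 q0 = {(u0, v0, w0). u0\<^sup>2 + v0\<^sup>2 + (rad q0)\<^sup>2 * w0\<^sup>2 = 1}"

definition Kc :: "real \<times> real \<times> real \<Rightarrow> real \<times> real \<times> real \<Rightarrow> real" where
  "Kc q0 l0 = (case q0 of (x0, y0, z0) \<Rightarrow> case l0 of (u0, v0, w0) \<Rightarrow> x0 * v0 - y0 * u0)"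

definition Lc :: "real \<times> real \<times> real \<Rightarrow> real \<times> real \<times> real \<Rightarrow> real" where
  "Lc q0 l0 = (case q0 of (x0, y0, z0) \<Rightarrow> case l0 of (u0, v0, w0) \<Rightarrow> x0 * u0 + y0 * v0)"

definition E1_star :: "real \<times> real \<times> real \<Rightarrow> (real \<times> real \<times> real) set" where
  "E1_star q0 = E1 q0 - ({l. Kc q0 l = 0} \<union> {l. Lc q0 l = 0} \<union> {l. snd (snd l) = 0})"

end

theory Submission
  imports Defs
begin


lemma const0:
  assumes "\<And>t. (f has_real_derivative 0) (at t)"
  shows "f t = f 0"
  using assms DERIV_isconst_all by blast

lemma uniq:
  assumes s1: "is_normal_sol x y z u v w" and s2: "is_normal_sol x' y' z' u' v' w'"
    and i: "x 0 = x' 0" "y 0 = y' 0" "z 0 = z' 0" "u 0 = u' 0" "v 0 = v' 0" "w 0 = w' 0"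
  shows "x t = x' t \<and> y t = y' t \<and> z t = z' t"
proof -
  have dx: "\<And>t. (x has_real_derivative u t) (at t)" "\<And>t. (y has_real_derivative v t) (at t)"
    "\<And>t. (z has_real_derivative (fr (rad (x t, y t, z t)))\<^sup>2 * w t) (at t)"
    "\<And>t. (u has_real_derivative - (w t)\<^sup>2 * x t) (at t)"
    "\<And>t. (v has_real_derivative - (w t)\<^sup>2 * y t) (at t)"
    "\<And>t. (w has_real_derivative 0) (at t)"
    using s1 unfolding is_normal_sol_def by auto
  have dx': "\<And>t. (x' has_real_derivative u' t) (at t)" "\<And>t. (y' has_real_derivative v' t) (at t)"
    "\<And>t. (z' has_real_derivative (fr (rad (x' t, y' t, z' t)))\<^sup>2 * w' t) (at t)"
    "\<And>t. (u' has_real_derivative - (w' t)\<^sup>2 * x' t) (at t)"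
    "\<And>t. (v' has_real_derivative - (w' t)\<^sup>2 * y' t) (at t)"
    "\<And>t. (w' has_real_derivative 0) (at t)"
    using s2 unfolding is_normal_sol_def by auto
  define W where "W = w 0"
  have wW: "\<And>t. w t = W" using const0[OF dx(6)] W_def by auto
  have wW': "\<And>t. w' t = W" using const0[OF dx'(6)] W_def i(6) by auto
  have lin: "\<And>t. p t = p' t"
    if dp: "\<And>t. (p has_real_derivative q t) (at t)" "\<And>t. (q has_real_derivative - W\<^sup>2 * p t) (at t)"
     and dp': "\<And>t. (p' has_real_derivative q' t) (at t)" "\<And>t. (q' has_real_derivative - W\<^sup>2 * p' t) (at t)"
     and i0: "p 0 = p' 0" "q 0 = q' 0"
     for p q p' q' :: "real \<Rightarrow> real"
  proof -
    define En where "En t = W\<^sup>2 * (p t - p' t)\<^sup>2 + (q t - q' t)\<^sup>2" for t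
    have "(En has_real_derivative 0) (at t)" for t
    proof -
      have "(En has_real_derivative W\<^sup>2 * (2 * (p t - p' t) * (q t - q' t)) + 2 * (q t - q' t) * (- W\<^sup>2 * p t - - W\<^sup>2 * p' t)) (at t)"
        unfolding En_def[abs_def]
        by (auto intro!: derivative_eq_intros dp dp' simp: power2_eq_square algebra_simps)
      moreover have "W\<^sup>2 * (2 * (p t - p' t) * (q t - q' t)) + 2 * (q t - q' t) * (- W\<^sup>2 * p t - - W\<^sup>2 * p' t) = 0"
        by (simp add: algebra_simps)
      ultimately show ?thesis by simp
    qed
    hence "En t = En 0" for t using const0 by blast
    hence "En t = 0" for t using i0 by (simp add: En_def)
    hence qq: "q t = q' t" for t unfolding En_def
      by (smt (verit) zero_le_power2 mult_nonneg_nonneg power2_less_eq_zero_iff zero_le_square)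
    have "((\<lambda>t. p t - p' t) has_real_derivative 0) (at t)" for t
      using DERIV_diff[OF dp(1) dp'(1), of t] qq by simp
    hence "p t - p' t = p 0 - p' 0" for t using const0[of "\<lambda>t. p t - p' t"] by blast
    thus "p t = p' t" for t using i0 by simp
  qed
  have xx: "\<And>t. x t = x' t" by (rule lin[OF dx(1) _ dx'(1) _ i(1) i(4)]) (use dx(4) dx'(4) wW wW' in auto)
  have yy: "\<And>t. y t = y' t" by (rule lin[OF dx(2) _ dx'(2) _ i(2) i(5)]) (use dx(5) dx'(5) wW wW' in auto)
  have "((\<lambda>t. z t - z' t) has_real_derivative 0) (at t)" for t
    using DERIV_diff[OF dx(3) dx'(3), of t] xx yy wW wW' by (simp add: rad_def fr_def)
  hence "z t - z' t = z 0 - z' 0" for t using const0[of "\<lambda>t. z t - z' t"] by blast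
  hence "z t = z' t" using i by simp
  thus ?thesis using xx yy by simp
qed



definition solx :: "real \<Rightarrow> real \<Rightarrow> real \<Rightarrow> real \<Rightarrow> real" where
  "solx x0 u w t = x0 * cos (w * t) + u * sin (w * t) / w"
definition solu :: "real \<Rightarrow> real \<Rightarrow> real \<Rightarrow> real \<Rightarrow> real" where
  "solu x0 u w t = u * cos (w * t) - x0 * w * sin (w * t)"
definition solz :: "real \<Rightarrow> real \<Rightarrow> real \<Rightarrow> real \<Rightarrow> real \<Rightarrow> real \<Rightarrow> real \<Rightarrow> real" where
  "solz x0 y0 z0 u v w t = z0 + (x0\<^sup>2 + y0\<^sup>2) * (w * t / 2 + sin (w * t) * cos (w * t) / 2)
     + (x0 * u + y0 * v) * (sin (w * t))\<^sup>2 / w + (u\<^sup>2 + v\<^sup>2) * (w * t - sin (w * t) * cos (w * t)) / (2 * w\<^sup>2)"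

lemma dsolx: "w \<noteq> 0 \<Longrightarrow> (solx x0 u w has_real_derivative solu x0 u w t) (at t)"
  unfolding solx_def[abs_def] solu_def
  by (auto intro!: derivative_eq_intros simp: field_simps)

lemma dsolu: "(solu x0 u w has_real_derivative - w\<^sup>2 * solx x0 u w t) (at t)" if "w \<noteq> 0"
  unfolding solx_def solu_def[abs_def] using that
  by (auto intro!: derivative_eq_intros simp: field_simps power2_eq_square)

lemma dsolz: "(solz x0 y0 z0 u v w has_real_derivative
    (fr (rad (solx x0 u w t, solx y0 v w t, solz x0 y0 z0 u v w t)))\<^sup>2 * w) (at t)" if "w \<noteq> 0"
proof -
  define s where "s = sin (w * t)"
  define c where "c = cos (w * t)"
  have sc: "s\<^sup>2 = 1 - c\<^sup>2" unfolding s_def c_def by (simp add: sin_squared_eq)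
  have "(solz x0 y0 z0 u v w has_real_derivative
     (x0\<^sup>2 + y0\<^sup>2) * (w / 2 + w * (c * c - s * s) / 2) + (x0 * u + y0 * v) * (2 * s * c * w) / w
     + (u\<^sup>2 + v\<^sup>2) * (w - w * (c * c - s * s)) / (2 * w\<^sup>2)) (at t)"
    unfolding solz_def[abs_def] s_def c_def using that
    by (auto intro!: derivative_eq_intros simp: field_simps power2_eq_square)
  moreover have "(x0\<^sup>2 + y0\<^sup>2) * (w / 2 + w * (c * c - s * s) / 2) + (x0 * u + y0 * v) * (2 * s * c * w) / w
     + (u\<^sup>2 + v\<^sup>2) * (w - w * (c * c - s * s)) / (2 * w\<^sup>2) = ((x0 * c + u * s / w)\<^sup>2 + (y0 * c + v * s / w)\<^sup>2) * w"
  proof -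
    have ss: "s * s = 1 - c * c" using sc by (simp add: power2_eq_square)
    have e1: "w / 2 + w * (c * c - s * s) / 2 = w * c * c" unfolding ss by (simp add: field_simps)
    have e2: "(w - w * (c * c - s * s)) / (2 * w\<^sup>2) = s * s / w" unfolding ss using that by (simp add: power2_eq_square field_simps)
    have e3: "(u\<^sup>2 + v\<^sup>2) * (w - w * (c * c - s * s)) / (2 * w\<^sup>2) = (u\<^sup>2 + v\<^sup>2) * (s * s / w)"
      using e2 by (metis times_divide_eq_right)
    show ?thesis unfolding e3 e1 using that by (simp add: power2_eq_square field_simps)
  qed
  moreover have "(fr (rad (solx x0 u w t, solx y0 v w t, solz x0 y0 z0 u v w t)))\<^sup>2 = (x0 * c + u * s / w)\<^sup>2 + (y0 * c + v * s / w)\<^sup>2"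
    by (simp add: fr_def rad_def solx_def s_def c_def)
  ultimately show ?thesis by simp
qed



lemma sol: "w \<noteq> 0 \<Longrightarrow> is_normal_sol (solx x0 u w) (solx y0 v w) (solz x0 y0 z0 u v w) (solu x0 u w) (solu y0 v w) (\<lambda>_. w)"
  unfolding is_normal_sol_def using dsolx dsolu dsolz by auto

lemma gamma_eq: assumes "w \<noteq> 0"
  shows "gamma (x0, y0, z0) (u, v, w) t = (solx x0 u w t, solx y0 v w t, solz x0 y0 z0 u v w t)"
  unfolding gamma_def
proof (rule the_equality)
  show "\<exists>x y z ua va wa. is_normal_sol x y z ua va wa \<and> (x 0, y 0, z 0) = (x0, y0, z0) \<and> (ua 0, va 0, wa 0) = (u, v, w) \<and>
     (solx x0 u w t, solx y0 v w t, solz x0 y0 z0 u v w t) = (x t, y t, z t)"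
    by (rule exI[of _ "solx x0 u w"], rule exI[of _ "solx y0 v w"], rule exI[of _ "solz x0 y0 z0 u v w"],
        rule exI[of _ "solu x0 u w"], rule exI[of _ "solu y0 v w"], rule exI[of _ "\<lambda>_. w"])
       (simp add: sol[OF assms] solx_def solu_def solz_def)
next
  fix q assume "\<exists>x y z ua va wa. is_normal_sol x y z ua va wa \<and> (x 0, y 0, z 0) = (x0, y0, z0) \<and> (ua 0, va 0, wa 0) = (u, v, w) \<and> q = (x t, y t, z t)"
  then obtain x y z ua va wa where h: "is_normal_sol x y z ua va wa" "(x 0, y 0, z 0) = (x0, y0, z0)" "(ua 0, va 0, wa 0) = (u, v, w)" "q = (x t, y t, z t)"
    by blast
  have "x t = solx x0 u w t \<and> y t = solx y0 v w t \<and> z t = solz x0 y0 z0 u v w t"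
    by (rule uniq[OF h(1) sol[OF assms]]) (use h(2,3) in \<open>auto simp: solx_def solu_def solz_def\<close>)
  thus "q = (solx x0 u w t, solx y0 v w t, solz x0 y0 z0 u v w t)" using h(4) by simp
qed

definition Ef :: "real \<times> real \<times> real \<Rightarrow> real \<times> real \<times> real \<Rightarrow> real \<times> real \<times> real" where
  "Ef q l = (solx (fst q) (fst l) (snd (snd l)) 1, solx (fst (snd q)) (fst (snd l)) (snd (snd l)) 1,
             solz (fst q) (fst (snd q)) (snd (snd q)) (fst l) (fst (snd l)) (snd (snd l)) 1)"

lemma Exp_eq: "snd (snd l) \<noteq> 0 \<Longrightarrow> Exp q l = Ef q l"
  using gamma_eq[of "snd (snd l)" "fst q" "fst (snd q)" "snd (snd q)" "fst l" "fst (snd l)" 1]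
  by (simp add: Exp_def Ef_def)



definition dS :: "real \<Rightarrow> real" where "dS w = sin w / w"
definition dA :: "real \<Rightarrow> real \<Rightarrow> real \<Rightarrow> real" where
  "dA x0 u w = - x0 * sin w + u * (w * cos w - sin w) / w\<^sup>2"
definition dZu :: "real \<Rightarrow> real \<Rightarrow> real \<Rightarrow> real" where
  "dZu x0 u w = x0 * (sin w)\<^sup>2 / w + u * (w - sin w * cos w) / w\<^sup>2"
definition dZw :: "real \<Rightarrow> real \<Rightarrow> real \<Rightarrow> real \<Rightarrow> real \<Rightarrow> real" where
  "dZw x0 y0 u v w = (x0\<^sup>2 + y0\<^sup>2) * (1 / 2 + (cos w * cos w - sin w * sin w) / 2)
    + (x0 * u + y0 * v) * (2 * sin w * cos w * w - sin w * sin w) / w\<^sup>2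
    + (u\<^sup>2 + v\<^sup>2) * ((1 - cos w * cos w + sin w * sin w) * w - 2 * (w - sin w * cos w)) / (2 * w ^ 3)"

definition DE :: "real \<times> real \<times> real \<Rightarrow> real \<times> real \<times> real \<Rightarrow> real \<times> real \<times> real \<Rightarrow> real \<times> real \<times> real" where
  "DE q l h = (dS (snd (snd l)) * fst h + dA (fst q) (fst l) (snd (snd l)) * snd (snd h),
     dS (snd (snd l)) * fst (snd h) + dA (fst (snd q)) (fst (snd l)) (snd (snd l)) * snd (snd h),
     dZu (fst q) (fst l) (snd (snd l)) * fst h + dZu (fst (snd q)) (fst (snd l)) (snd (snd l)) * fst (snd h)
     + dZw (fst q) (fst (snd q)) (fst l) (fst (snd l)) (snd (snd l)) * snd (snd h))"

lemma dX: assumes "w \<noteq> 0"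
  shows "((\<lambda>l. solx x0 (fst l) (snd (snd l)) 1) has_derivative
     (\<lambda>h. dS w * fst h + dA x0 u w * snd (snd h))) (at (u, v, w))"
  unfolding solx_def dS_def dA_def
  apply (rule has_derivative_eq_rhs)
   apply (rule derivative_intros | simp add: assms)+
  apply (rule ext)
  using assms apply (simp add: field_simps power2_eq_square)
  done

lemma dY: assumes "w \<noteq> 0"
  shows "((\<lambda>l. solx y0 (fst (snd l)) (snd (snd l)) 1) has_derivative
     (\<lambda>h. dS w * fst (snd h) + dA y0 v w * snd (snd h))) (at (u, v, w))"
  unfolding solx_def dS_def dA_def
  apply (rule has_derivative_eq_rhs)
   apply (rule derivative_intros | simp add: assms)+
  apply (rule ext)
  using assms apply (simp add: field_simps power2_eq_square)
  done

lemma dZ: assumes "w \<noteq> 0"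
  shows "((\<lambda>l. solz x0 y0 z0 (fst l) (fst (snd l)) (snd (snd l)) 1) has_derivative
     (\<lambda>h. dZu x0 u w * fst h + dZu y0 v w * fst (snd h) + dZw x0 y0 u v w * snd (snd h))) (at (u, v, w))"
  unfolding solz_def dZu_def dZw_def
  apply (rule has_derivative_eq_rhs)
   apply (rule derivative_intros | simp add: assms)+
  apply (rule ext)
  using assms apply (simp add: field_simps power2_eq_square power3_eq_cube)
  done

lemma dEf: assumes "snd (snd l) \<noteq> 0" shows "(Ef q has_derivative DE q l) (at l)"
proof -
  obtain u v w where l: "l = (u, v, w)" by (cases l) auto
  obtain x0 y0 z0 where q: "q = (x0, y0, z0)" by (cases q) auto
  have w: "w \<noteq> 0" using assms l by simp
  show ?thesis
    unfolding l q Ef_def[abs_def] DE_def[abs_def] fst_conv snd_conv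
    by (intro has_derivative_Pair dX[OF w] dY[OF w] dZ[OF w])
qed

lemma dExp: assumes "snd (snd l) \<noteq> 0" shows "(Exp q has_derivative DE q l) (at l)"
proof (rule has_derivative_transform_within_open[OF dEf[OF assms]])
  show "open {l::real\<times>real\<times>real. snd (snd l) \<noteq> 0}"
    by (intro open_Collect_neq continuous_intros)
qed (use assms Exp_eq in auto)



lemma f_pos: assumes "0 < x" "x < pi" shows "sin x - x * cos x > 0"
proof -
  have d: "\<And>y. ((\<lambda>y. sin y - y * cos y) has_real_derivative y * sin y) (at y)"
    by (rule derivative_eq_intros refl | simp)+
  obtain z where z: "0 < z" "z < x" "(sin x - x * cos x) - (sin 0 - 0 * cos 0) = (x - 0) * (z * sin z)"
    using MVT2[OF assms(1), of "\<lambda>y. sin y - y * cos y" "\<lambda>y. y * sin y"] d by blast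
  have "sin z > 0" using z assms by (intro sin_gt_zero) auto
  thus ?thesis using z assms by simp
qed

lemma h_pos: assumes "0 < x" "x < pi" shows "sin x - x * cos x - x\<^sup>2 * sin x / 3 > 0"
proof -
  have d: "\<And>y. ((\<lambda>y. sin y - y * cos y - y\<^sup>2 * sin y / 3) has_real_derivative y * (sin y - y * cos y) / 3) (at y)"
    by (rule derivative_eq_intros refl | simp add: field_simps power2_eq_square)+
  obtain z where z: "0 < z" "z < x" "(sin x - x * cos x - x\<^sup>2 * sin x / 3) - (sin 0 - 0 * cos 0 - 0\<^sup>2 * sin 0 / 3) = (x - 0) * (z * (sin z - z * cos z) / 3)"
    using MVT2[OF assms(1), of "\<lambda>y. sin y - y * cos y - y\<^sup>2 * sin y / 3" "\<lambda>y. y * (sin y - y * cos y) / 3"] d by blast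
  have "sin z - z * cos z > 0" using z assms by (intro f_pos) auto
  hence "x * (z * (sin z - z * cos z) / 3) > 0" using z by simp
  thus ?thesis using z(3) by simp
qed

lemma key_ineq: assumes "0 < \<bar>x\<bar>" "\<bar>x\<bar> < pi"
  shows "sin x \<noteq> 0" "(sin x - x * cos x) / sin x \<ge> x\<^sup>2 / 3"
proof -
  have "sin \<bar>x\<bar> > 0" using assms by (intro sin_gt_zero) auto
  moreover have "sin \<bar>x\<bar> - \<bar>x\<bar> * cos \<bar>x\<bar> - \<bar>x\<bar>\<^sup>2 * sin \<bar>x\<bar> / 3 > 0" using assms by (intro h_pos) auto
  ultimately have A: "sin \<bar>x\<bar> > 0" "(sin \<bar>x\<bar> - \<bar>x\<bar> * cos \<bar>x\<bar>) / sin \<bar>x\<bar> \<ge> \<bar>x\<bar>\<^sup>2 / 3"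
    by (auto simp: field_simps)
  have e1: "sin \<bar>x\<bar> = sgn x * sin x" and e2: "cos \<bar>x\<bar> = cos x" and e3: "\<bar>x\<bar> = sgn x * x"
    by (cases "x \<ge> 0"; simp add: sgn_if)+
  have "sgn x \<noteq> 0" using assms by (auto simp: sgn_if)
  then have e4: "(sin \<bar>x\<bar> - \<bar>x\<bar> * cos \<bar>x\<bar>) / sin \<bar>x\<bar> = (sin x - x * cos x) / sin x"
  proof (cases "x \<ge> 0")
    case False
    hence "\<bar>x\<bar> = - x" by simp
    hence "(sin \<bar>x\<bar> - \<bar>x\<bar> * cos \<bar>x\<bar>) / sin \<bar>x\<bar> = (- (sin x - x * cos x)) / (- sin x)" by simp
    thus ?thesis by (simp only: minus_divide_divide)
  qed simp
  show "sin x \<noteq> 0" using A(1) e1 by auto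
  show "(sin x - x * cos x) / sin x \<ge> x\<^sup>2 / 3" using A(2) unfolding e4 power2_abs .
qed

lemma notsurj: assumes "sin (snd (snd l)) = 0" shows "\<not> surj (DE q l)"
proof
  assume s: "surj (DE q l)"
  obtain h1 where h1: "DE q l h1 = (1, 0, 0)" using s by (metis surjD)
  obtain h2 where h2: "DE q l h2 = (0, 1, 0)" using s by (metis surjD)
  define A where "A = dA (fst q) (fst l) (snd (snd l))"
  define B where "B = dA (fst (snd q)) (fst (snd l)) (snd (snd l))"
  have "A * snd (snd h1) = 1" "B * snd (snd h1) = 0" "A * snd (snd h2) = 0" "B * snd (snd h2) = 1"
    using h1 h2 assms by (auto simp: DE_def dS_def A_def B_def)
  thus False by (metis mult_eq_0_iff zero_neq_one)
qed

lemma surjDE: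
  assumes "dS (snd (snd l)) \<noteq> 0"
    and "dZw (fst q) (fst (snd q)) (fst l) (fst (snd l)) (snd (snd l))
      - (dZu (fst q) (fst l) (snd (snd l)) * dA (fst q) (fst l) (snd (snd l))
        + dZu (fst (snd q)) (fst (snd l)) (snd (snd l)) * dA (fst (snd q)) (fst (snd l)) (snd (snd l))) / dS (snd (snd l)) \<noteq> 0"
  shows "surj (DE q l)"
proof -
  define S where "S = dS (snd (snd l))"
  define A where "A = dA (fst q) (fst l) (snd (snd l))"
  define B where "B = dA (fst (snd q)) (fst (snd l)) (snd (snd l))"
  define Zu where "Zu = dZu (fst q) (fst l) (snd (snd l))"
  define Zv where "Zv = dZu (fst (snd q)) (fst (snd l)) (snd (snd l))"
  define Zw where "Zw = dZw (fst q) (fst (snd q)) (fst l) (fst (snd l)) (snd (snd l))"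
  define Dl where "Dl = Zw - (Zu * A + Zv * B) / S"
  have S: "S \<noteq> 0" and Dl: "Dl \<noteq> 0" using assms by (auto simp: S_def A_def B_def Zu_def Zv_def Zw_def Dl_def)
  have DEf: "DE q l h = (S * fst h + A * snd (snd h), S * fst (snd h) + B * snd (snd h),
      Zu * fst h + Zv * fst (snd h) + Zw * snd (snd h))" for h
    by (simp add: DE_def S_def A_def B_def Zu_def Zv_def Zw_def)
  show ?thesis
  proof (rule surjI)
    fix y :: "real \<times> real \<times> real"
    define p where "p = fst y"
    define r where "r = fst (snd y)"
    define s where "s = snd (snd y)"
    have y: "y = (p, r, s)" by (simp add: p_def r_def s_def)
    define hw where "hw = (s - (Zu * p + Zv * r) / S) / Dl"
    define h where "h = ((p - A * hw) / S, (r - B * hw) / S, hw)"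
    have "Zu * ((p - A * hw) / S) + Zv * ((r - B * hw) / S) + Zw * hw = (Zu * p + Zv * r) / S + Dl * hw"
      using S by (simp add: Dl_def field_simps)
    also have "\<dots> = s" using Dl by (simp add: hw_def)
    finally have "Zu * ((p - A * hw) / S) + Zv * ((r - B * hw) / S) + Zw * hw = s" .
    then show "DE q l h = y" using S unfolding DEf y h_def by simp
  qed
qed



lemma Delta_alg: fixes s c w :: real assumes w: "w \<noteq> 0" and s: "s \<noteq> 0" and "L = x0 * u + y0 * v" "P = u\<^sup>2 + v\<^sup>2"
  shows "r2 * (c * c) + L * (2 * s * c * w - s * s) / w\<^sup>2 + P * (c * (s - w * c)) / w ^ 3
   - ((x0 * s\<^sup>2 / w + u * (w - s * c) / w\<^sup>2) * (- x0 * s + u * (w * c - s) / w\<^sup>2)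
     + (y0 * s\<^sup>2 / w + v * (w - s * c) / w\<^sup>2) * (- y0 * s + v * (w * c - s) / w\<^sup>2)) / (s / w)
   = r2 * (c * c) + (x0\<^sup>2 + y0\<^sup>2) * (s * s) + L + P * (s - w * c) / (w\<^sup>2 * s)"
  using assms
  by (simp add: field_simps power2_eq_square power3_eq_cube)

lemma Delta_eq: assumes w: "w \<noteq> 0" and s: "sin w \<noteq> 0"
  shows "dZw x0 y0 u v w - (dZu x0 u w * dA x0 u w + dZu y0 v w * dA y0 v w) / dS w
    = (x0\<^sup>2 + y0\<^sup>2) + (x0 * u + y0 * v) + (u\<^sup>2 + v\<^sup>2) * (sin w - w * cos w) / (w\<^sup>2 * sin w)"
proof -
  define S where "S = sin w"
  define C where "C = cos w"
  have ss: "S * S = 1 - C * C" using sin_cos_squared_add[of w] by (simp add: power2_eq_square S_def C_def)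
  have e1: "1 / 2 + (C * C - S * S) / 2 = C * C" unfolding ss by (simp add: field_simps)
  have e2: "(1 - C * C + S * S) * w - 2 * (w - S * C) = 2 * (C * (S - w * C))" unfolding ss by (simp add: algebra_simps)
  have e3: "(u\<^sup>2 + v\<^sup>2) * ((1 - C * C + S * S) * w - 2 * (w - S * C)) / (2 * w ^ 3) = (u\<^sup>2 + v\<^sup>2) * (C * (S - w * C)) / w ^ 3"
    unfolding e2 by simp
  have "dZw x0 y0 u v w - (dZu x0 u w * dA x0 u w + dZu y0 v w * dA y0 v w) / dS w
    = (x0\<^sup>2 + y0\<^sup>2) * (C * C) + (x0 * u + y0 * v) * (2 * S * C * w - S * S) / w\<^sup>2 + (u\<^sup>2 + v\<^sup>2) * (C * (S - w * C)) / w ^ 3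
   - ((x0 * S\<^sup>2 / w + u * (w - S * C) / w\<^sup>2) * (- x0 * S + u * (w * C - S) / w\<^sup>2)
     + (y0 * S\<^sup>2 / w + v * (w - S * C) / w\<^sup>2) * (- y0 * S + v * (w * C - S) / w\<^sup>2)) / (S / w)"
    unfolding dZw_def dZu_def dA_def dS_def S_def[symmetric] C_def[symmetric] e1 e3 by simp
  also have "\<dots> = (x0\<^sup>2 + y0\<^sup>2) * (C * C) + (x0\<^sup>2 + y0\<^sup>2) * (S * S) + (x0 * u + y0 * v) + (u\<^sup>2 + v\<^sup>2) * (S - w * C) / (w\<^sup>2 * S)"
    by (rule Delta_alg) (use w s S_def in auto)
  also have "\<dots> = (x0\<^sup>2 + y0\<^sup>2) + (x0 * u + y0 * v) + (u\<^sup>2 + v\<^sup>2) * (S - w * C) / (w\<^sup>2 * S)"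
  proof -
    have "C * C + S * S = 1" using ss by simp
    hence "(x0\<^sup>2 + y0\<^sup>2) * (C * C) + (x0\<^sup>2 + y0\<^sup>2) * (S * S) = x0\<^sup>2 + y0\<^sup>2"
      by (metis distrib_left mult.right_neutral)
    thus ?thesis by simp
  qed
  finally show ?thesis by (simp add: S_def C_def)
qed



lemma poly_pos: fixes r2 L P :: real assumes "r2 > 0" "P \<ge> 0" "L\<^sup>2 \<le> r2 * P"
  shows "r2 + L + P / 3 > 0"
proof (cases "L \<ge> 0")
  case True thus ?thesis using assms by simp
next
  case False
  have L2: "L\<^sup>2 > 0" using False by simp
  have rp: "r2 * P > 0" using L2 assms(3) by linarith
  have a: "(r2 + P / 3)\<^sup>2 = 4 * (r2 * P) / 3 + (r2 - P / 3)\<^sup>2" by (simp add: power2_eq_square algebra_simps)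
  have b: "(r2 - P / 3)\<^sup>2 \<ge> 0" by simp
  have nl: "(- L)\<^sup>2 = L\<^sup>2" by simp
  have "(- L)\<^sup>2 < (r2 + P / 3)\<^sup>2" using a b rp assms(3) nl by linarith
  hence "- L < r2 + P / 3" by (rule power2_less_imp_less) (use assms in simp)
  thus ?thesis by simp
qed

lemma Delta_pos: assumes "x0\<^sup>2 + y0\<^sup>2 > 0" "0 < \<bar>w\<bar>" "\<bar>w\<bar> < pi"
  shows "dZw x0 y0 u v w - (dZu x0 u w * dA x0 u w + dZu y0 v w * dA y0 v w) / dS w > 0"
proof -
  have s: "sin w \<noteq> 0" and k: "(sin w - w * cos w) / sin w \<ge> w\<^sup>2 / 3" using key_ineq assms(2,3) by auto
  have w: "w \<noteq> 0" using assms by auto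
  have "(sin w - w * cos w) / (w\<^sup>2 * sin w) = ((sin w - w * cos w) / sin w) / w\<^sup>2" by simp
  also have "\<dots> \<ge> (w\<^sup>2 / 3) / w\<^sup>2" using k by (intro divide_right_mono) auto
  also have "(w\<^sup>2 / 3) / w\<^sup>2 = 1 / 3" using w by simp
  finally have k2: "(sin w - w * cos w) / (w\<^sup>2 * sin w) \<ge> 1 / 3" .
  have P: "u\<^sup>2 + v\<^sup>2 \<ge> 0" by simp
  have k3: "(u\<^sup>2 + v\<^sup>2) * (sin w - w * cos w) / (w\<^sup>2 * sin w) \<ge> (u\<^sup>2 + v\<^sup>2) / 3"
    using mult_left_mono[OF k2 P] by simp
  have cs: "(x0 * u + y0 * v)\<^sup>2 \<le> (x0\<^sup>2 + y0\<^sup>2) * (u\<^sup>2 + v\<^sup>2)"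
  proof -
    have "(x0\<^sup>2 + y0\<^sup>2) * (u\<^sup>2 + v\<^sup>2) - (x0 * u + y0 * v)\<^sup>2 = (x0 * v - y0 * u)\<^sup>2"
      by (simp add: power2_eq_square algebra_simps)
    moreover have "(x0 * v - y0 * u)\<^sup>2 \<ge> 0" by simp
    ultimately show ?thesis by linarith
  qed
  have "(x0\<^sup>2 + y0\<^sup>2) + (x0 * u + y0 * v) + (u\<^sup>2 + v\<^sup>2) / 3 > 0"
    by (rule poly_pos[OF assms(1) P cs])
  thus ?thesis using Delta_eq[OF w s, of x0 y0 u v] k3 by linarith
qed

lemma crit_iff: assumes "snd (snd l) \<noteq> 0"
  shows "critical_point (Exp q) l \<longleftrightarrow> \<not> surj (DE q l)"
proof -
  have d: "(Exp q has_derivative DE q l) (at l)" by (rule dExp[OF assms])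
  hence "frechet_derivative (Exp q) (at l) = DE q l" by (simp add: frechet_derivative_at[symmetric])
  moreover have "Exp q differentiable (at l)" using d by (auto simp: differentiable_def)
  ultimately show ?thesis by (simp add: critical_point_def)
qed

theorem corollary12:
  fixes q0 l0 :: "real \<times> real \<times> real"
  assumes "q0 \<notin> Sigma_set"
    and "l0 \<in> E1_star q0"
  shows "t_con q0 l0 = pi / \<bar>snd (snd l0)\<bar>"
proof -
  obtain x0 y0 z0 where q: "q0 = (x0, y0, z0)" by (cases q0) auto
  obtain u0 v0 w0 where l: "l0 = (u0, v0, w0)" by (cases l0) auto
  have r: "x0\<^sup>2 + y0\<^sup>2 > 0" using assms(1) unfolding q Sigma_set_def rad_def
    by (simp add: sum_power2_gt_zero_iff)
  have w0: "w0 \<noteq> 0" using assms(2) unfolding l E1_star_def by auto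
  define ts where "ts = pi / \<bar>w0\<bar>"
  have ts: "ts > 0" using w0 by (simp add: ts_def)
  have crit: "critical_point (Exp q0) (t *\<^sub>R l0) \<longleftrightarrow> \<not> surj (DE q0 (t *\<^sub>R l0))" if "t > 0" for t
    by (rule crit_iff) (use that w0 in \<open>simp add: l\<close>)
  have in_T: "critical_point (Exp q0) (ts *\<^sub>R l0)"
  proof -
    have "ts * w0 = pi \<or> ts * w0 = - pi" using w0 by (cases "w0 > 0") (auto simp: ts_def)
    hence "sin (snd (snd (ts *\<^sub>R l0))) = 0" by (auto simp: l)
    thus ?thesis using crit[OF ts] notsurj by blast
  qed
  have lower: "ts \<le> t" if "t > 0" "critical_point (Exp q0) (t *\<^sub>R l0)" for t
  proof (rule ccontr)
    assume "\<not> ts \<le> t"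
    hence tl: "t < ts" by simp
    have a1: "0 < \<bar>t * w0\<bar>" using that w0 by simp
    have "\<bar>t * w0\<bar> = t * \<bar>w0\<bar>" using that by (simp add: abs_mult)
    also have "\<dots> < ts * \<bar>w0\<bar>" using tl w0 by simp
    also have "\<dots> = pi" using w0 by (simp add: ts_def)
    finally have a2: "\<bar>t * w0\<bar> < pi" .
    have sn: "sin (t * w0) \<noteq> 0" using key_ineq(1)[OF a1 a2] .
    have "dS (t * w0) \<noteq> 0" using sn a1 by (simp add: dS_def)
    moreover have "dZw x0 y0 (t * u0) (t * v0) (t * w0) - (dZu x0 (t * u0) (t * w0) * dA x0 (t * u0) (t * w0)
        + dZu y0 (t * v0) (t * w0) * dA y0 (t * v0) (t * w0)) / dS (t * w0) > 0"
      by (rule Delta_pos[OF r a1 a2])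
    ultimately have "surj (DE q0 (t *\<^sub>R l0))"
      by (intro surjDE) (auto simp: q l)
    thus False using crit[OF that(1)] that(2) by blast
  qed
  have "Inf {t. t > 0 \<and> critical_point (Exp q0) (t *\<^sub>R l0)} = ts"
    by (rule cInf_eq_minimum) (use ts in_T lower in auto)
  thus ?thesis by (simp add: t_con_def ts_def l)
qed

end
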